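(* Let $d>0$, $N\ge 1$, let $\mathcal{S}=\{s_1,s_2,s_3,s_4\}$ be the 4-PAM constellation with $s_1=-3d$, $s_2=-d$, $s_3=d$, $s_4=3d$, labeled by any Gray labeling. For any two distinct sequences $\boldsymbol{x},\hat{\boldsymbol{x}}\in\mathcal{S}^N$, the asymptotic loss satisfies $\mathsf{L}(\boldsymbol{x},\hat{\boldsymbol{x}})\le 1.25$ dB.
   Context: A labeling is a bijection $\Phi_{\mathcal{S}}:\{0,1\}^2\to\mathcal{S}$, described by $\boldsymbol{q}=[q_1,q_2,q_3,q_4]$, where $q_i$ is the integer whose two-bit binary representation (most significant bit first) is $\Phi_{\mathcal{S}}^{-1}(s_i)$. The Gray labelings are $[0,1,3,2]$, $[0,2,3,1]$, $[1,0,2,3]$, $[2,0,1,3]$. For $\boldsymbol{x}=[x[1],\dots,x[N]]$, $\hat{\boldsymbol{x}}=[\hat{x}[1],\dots,\hat{x}[N]]\in\mathcal{S}^N$ and each $k$ with $x[k]\neq\hat{x}[k]$, define $\mu^{\mathcal{X}}_k=\sigma^{2,\mathcal{X}}_k=(x[k]-\hat{x}[k])^2/(4d^2)$ (so equal to 1, 4 or 9), and define $\mu^{\mathcal{B}}_k=\sigma^{2,\mathcal{B}}_k=(x[k]-\hat{x}[k])^2/(4d^2)$ except when $\{x[k],\hat{x}[k]\}=\{s_1,s_4\}$, in which case $\mu^{\mathcal{B}}_k=3$ and $\sigma^{2,\mathcal{B}}_k=1$. With sums over all $k$ such that $x[k]\neq\hat{x}[k]$, the normalized distances are $a^{\mathcal{X}}(\boldsymbol{x},\hat{\boldsymbol{x}})=\sum_k\mu^{\mathcal{X}}_k/\sqrt{\sum_k\sigma^{2,\mathcal{X}}_k}$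 (symbol-wise ML decoder) and $a^{\mathcal{B}}(\boldsymbol{x},\hat{\boldsymbol{x}})=\sum_k\mu^{\mathcal{B}}_k/\sqrt{\sum_k\sigma^{2,\mathcal{B}}_k}$ (bit-wise max-log decoder under the zero-crossing Gaussian approximation of the L-values), and the asymptotic loss (in dB) of the bit-wise decoder relative to the symbol-wise decoder is $\mathsf{L}(\boldsymbol{x},\hat{\boldsymbol{x}})=20\log_{10}\big(a^{\mathcal{X}}(\boldsymbol{x},\hat{\boldsymbol{x}})/a^{\mathcal{B}}(\boldsymbol{x},\hat{\boldsymbol{x}})\big)$. (The pairwise error probabilities are $Q(a\,d/\sigma_z)$ with $a$ the respective normalized distance.) *)

theory Defs
  imports Complex_Main
begin

definition pam_s :: "real \<Rightarrow> nat \<Rightarrow> real" where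
  "pam_s d i = (if i = 1 then -3*d else if i = 2 then -d else if i = 3 then d else 3*d)"

definition pam4 :: "real \<Rightarrow> real set" where
  "pam4 d = {pam_s d 1, pam_s d 2, pam_s d 3, pam_s d 4}"

text \<open>Labelings given by q = [q_1,q_2,q_3,q_4]; the Gray labelings.\<close>
definition gray_labelings :: "nat list set" where
  "gray_labelings = {[0,1,3,2], [0,2,3,1], [1,0,2,3], [2,0,1,3]}"

definition mu_X :: "real \<Rightarrow> real \<Rightarrow> real \<Rightarrow> real" where
  "mu_X d a b = (a - b)^2 / (4 * d^2)"

definition sigma2_X :: "real \<Rightarrow> real \<Rightarrow> real \<Rightarrow> real" where
  "sigma2_X d a b = (a - b)^2 / (4 * d^2)"

definition mu_B :: "real \<Rightarrow> real \<Rightarrow> real \<Rightarrow> real" where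
  "mu_B d a b = (if {a, b} = {pam_s d 1, pam_s d 4} then 3 else (a - b)^2 / (4 * d^2))"

definition sigma2_B :: "real \<Rightarrow> real \<Rightarrow> real \<Rightarrow> real" where
  "sigma2_B d a b = (if {a, b} = {pam_s d 1, pam_s d 4} then 1 else (a - b)^2 / (4 * d^2))"

definition diff_idx :: "nat \<Rightarrow> (nat \<Rightarrow> real) \<Rightarrow> (nat \<Rightarrow> real) \<Rightarrow> nat set" where
  "diff_idx N x xh = {k \<in> {1..N}. x k \<noteq> xh k}"

definition a_X :: "real \<Rightarrow> nat \<Rightarrow> (nat \<Rightarrow> real) \<Rightarrow> (nat \<Rightarrow> real) \<Rightarrow> real" where
  "a_X d N x xh = (\<Sum>k\<in>diff_idx N x xh. mu_X d (x k) (xh k))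
                   / sqrt (\<Sum>k\<in>diff_idx N x xh. sigma2_X d (x k) (xh k))"

definition a_B :: "real \<Rightarrow> nat \<Rightarrow> (nat \<Rightarrow> real) \<Rightarrow> (nat \<Rightarrow> real) \<Rightarrow> real" where
  "a_B d N x xh = (\<Sum>k\<in>diff_idx N x xh. mu_B d (x k) (xh k))
                   / sqrt (\<Sum>k\<in>diff_idx N x xh. sigma2_B d (x k) (xh k))"

definition asym_loss :: "real \<Rightarrow> nat \<Rightarrow> (nat \<Rightarrow> real) \<Rightarrow> (nat \<Rightarrow> real) \<Rightarrow> real" where
  "asym_loss d N x xh = 20 * log 10 (a_X d N x xh / a_B d N x xh)"

end

theory Submission
  imports Defs
begin

definition ee :: "real \<Rightarrow> real \<Rightarrow> real \<Rightarrow> real" where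
  "ee d a b = (if {a, b} = {pam_s d 1, pam_s d 4} then 1 else 0)"

lemma elem:
  assumes d: "d > 0" and a: "a \<in> pam4 d" and b: "b \<in> pam4 d" and ab: "a \<noteq> b"
  shows "mu_X d a b = sigma2_B d a b + 8 * ee d a b \<and> mu_B d a b = sigma2_B d a b + 2 * ee d a b
     \<and> ee d a b \<le> sigma2_B d a b \<and> 0 < sigma2_B d a b \<and> 0 \<le> ee d a b"
  using a b ab d
  unfolding pam4_def pam_s_def ee_def mu_X_def mu_B_def sigma2_B_def
  by (auto simp: doubleton_eq_iff power2_eq_square field_simps)

lemma ineq:
  fixes S E :: real
  assumes "0 \<le> E" "E \<le> S" "0 < S"
  shows "(S + 8*E) * S / (S + 2*E)^2 \<le> 4/3"
proof -
  have "3*((S + 8*E) * S) \<le> 4 * (S + 2*E)^2"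
    using sum_squares_ge_zero[of "S - 4*E" 0] by (simp add: power2_eq_square algebra_simps)
  moreover have "(S+2*E)^2 > 0" using assms by simp
  ultimately show ?thesis by (simp add: field_simps)
qed

lemma logbound:
  fixes Q :: real
  assumes "0 < Q" "Q \<le> 4/3"
  shows "20 * log 10 (sqrt Q) \<le> 1.25"
proof -
  have "Q^8 \<le> (4/3)^8" using assms by (intro power_mono) auto
  also have "\<dots> < 10" by (simp add: power_divide)
  finally have q8: "Q^8 < 10" .
  have "log 10 (Q^8) < log 10 10" using q8 assms by (subst log_less_cancel_iff) auto
  hence "8 * log 10 Q < 1" using assms by (simp add: log_nat_power)
  moreover have "log 10 (sqrt Q) = log 10 Q / 2" using assms
    by (simp add: sqrt_def log_root)
  ultimately show ?thesis by simp
qed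

theorem theorem1:
  fixes d :: real and N :: nat and q :: "nat list" and x xh :: "nat \<Rightarrow> real"
  assumes "d > 0" and "N \<ge> 1"
    and "q \<in> gray_labelings"
    and "\<forall>k\<in>{1..N}. x k \<in> pam4 d"
    and "\<forall>k\<in>{1..N}. xh k \<in> pam4 d"
    and "\<exists>k\<in>{1..N}. x k \<noteq> xh k"
  shows "asym_loss d N x xh \<le> 1.25"
proof -
  define D where "D = diff_idx N x xh"
  define S where "S = (\<Sum>k\<in>D. sigma2_B d (x k) (xh k))"
  define E where "E = (\<Sum>k\<in>D. ee d (x k) (xh k))"
  have fin: "finite D" unfolding D_def diff_idx_def by simp
  have ne: "D \<noteq> {}" using assms(6) unfolding D_def diff_idx_def by auto
  have el: "\<And>k. k \<in> D \<Longrightarrow> mu_X d (x k) (xh k) = sigma2_B d (x k) (xh k) + 8 * ee d (x k) (xh k) \<and> mu_B d (x k) (xh k) = sigma2_B d (x k) (xh k) + 2 * ee d (x k) (xh k)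
     \<and> ee d (x k) (xh k) \<le> sigma2_B d (x k) (xh k) \<and> 0 < sigma2_B d (x k) (xh k) \<and> 0 \<le> ee d (x k) (xh k)"
    using elem assms(1,4,5) unfolding D_def diff_idx_def by auto
  have SX: "(\<Sum>k\<in>D. mu_X d (x k) (xh k)) = S + 8*E"
    using el by (simp add: S_def E_def sum.distrib sum_distrib_left)
  have SX2: "(\<Sum>k\<in>D. sigma2_X d (x k) (xh k)) = S + 8*E"
    using SX by (simp add: mu_X_def sigma2_X_def)
  have SB: "(\<Sum>k\<in>D. mu_B d (x k) (xh k)) = S + 2*E"
    using el by (simp add: S_def E_def sum.distrib sum_distrib_left)
  have E0: "0 \<le> E" unfolding E_def using el by (simp add: sum_nonneg)
  have ES: "E \<le> S" unfolding E_def S_def using el by (simp add: sum_mono)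
  have S0: "0 < S" unfolding S_def using el fin ne by (simp add: sum_pos)
  have aX: "a_X d N x xh = sqrt (S + 8*E)"
    using SX SX2 E0 S0 unfolding a_X_def D_def[symmetric]
    by (metis add_nonneg_nonneg mult_nonneg_nonneg real_div_sqrt zero_le_numeral less_imp_le)
  have aB: "a_B d N x xh = (S + 2*E) / sqrt S"
    using SB unfolding a_B_def D_def[symmetric] S_def by simp
  define Q where "Q = (S + 8*E) * S / (S + 2*E)^2"
  have "a_X d N x xh / a_B d N x xh = sqrt Q"
    unfolding aX aB Q_def using E0 S0
    by (simp add: real_sqrt_divide real_sqrt_mult)
  moreover have "0 < Q" unfolding Q_def using E0 S0 by simp
  moreover have "Q \<le> 4/3" unfolding Q_def using ineq E0 ES S0 by simp
  ultimately show ?thesis unfolding asym_loss_def using logbound by simp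
qed

end
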